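(* Let $\beta\in(0,1]$, let $\mathfrak{g}(x)=x^\beta$ and $\mathfrak{h}(x)=\frac{1}{\log(1/x)}$ (for small $x>0$, with $\mathfrak h(0)=0$). If $E\subseteq\mathbb{R}^2$ is an $F_{\mathfrak{h}\mathfrak{g}}$-set, then $\dim(E)\ge\frac{\beta}{2}$.
   Context: $\dim$ denotes Hausdorff dimension. For a non-decreasing $h$ with $h(0)=0$, $F\subseteq\mathbb{R}^n$, $\delta>0$: $\mathcal{H}^h_\delta(F)=\inf\{\sum_i h(\mathrm{diam}(F_i)): F\subseteq\bigcup_i F_i,\ \mathrm{diam}(F_i)<\delta\}$ and $\mathcal{H}^h(F)=\sup_{\delta>0}\mathcal{H}^h_\delta(F)$. $\mathbb{S}$ is the unit circle. A set $E\subseteq\mathbb{R}^2$ is an $F_{\mathfrak{h}\mathfrak{g}}$-set if there is $L\subseteq\mathbb{S}$ with $\mathcal{H}^{\mathfrak{g}}(L)>0$ and a number $\delta_E>0$ such that for each $e\in L$ there is a line segment $\ell_e$ in direction $e$ with $\mathcal{H}^{\mathfrak{h}}_\delta(\ell_e\cap E)>1$ for all $0<\delta<\delta_E$. *)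

theory Defs
  imports "HOL-Analysis.Analysis"
begin

definition hcontent :: "(real \<Rightarrow> real) \<Rightarrow> real \<Rightarrow> 'a::metric_space set \<Rightarrow> ennreal" where
  "hcontent h \<delta> F =
     (INF C \<in> {C :: nat \<Rightarrow> 'a set. F \<subseteq> (\<Union>i. C i) \<and> (\<forall>i. bounded (C i) \<and> diameter (C i) < \<delta>)}.
        (\<Sum>i. ennreal (h (diameter (C i)))))"

definition hmeasure :: "(real \<Rightarrow> real) \<Rightarrow> 'a::metric_space set \<Rightarrow> ennreal" where
  "hmeasure h F = (SUP \<delta> \<in> {0<..}. hcontent h \<delta> F)"

definition hdim :: "'a::metric_space set \<Rightarrow> ereal" where
  "hdim F = Inf {ereal s | s. 0 \<le> s \<and> hmeasure (\<lambda>x. x powr s) F = 0}"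

definition gauge_g :: "real \<Rightarrow> real \<Rightarrow> real" where
  "gauge_g \<beta> x = x powr \<beta>"

text \<open>The gauge h(x) = 1/log(1/x) near 0, h(0) = 0, extended monotonically (constant 1)
  for x \<ge> 1/e; only values near 0 matter.\<close>
definition gauge_h :: "real \<Rightarrow> real" where
  "gauge_h x = (if x \<le> 0 then 0 else if x < exp (-1) then 1 / ln (1 / x) else 1)"

definition F_set :: "(real \<Rightarrow> real) \<Rightarrow> (real \<Rightarrow> real) \<Rightarrow> (real^2) set \<Rightarrow> bool" where
  "F_set h g E \<longleftrightarrow>
     (\<exists>L \<subseteq> sphere (0::real^2) 1. hmeasure g L > 0 \<and>
        (\<exists>\<delta>E > 0. \<forall>e \<in> L. \<exists>a t. t > 0 \<and>
           (\<forall>\<delta>. 0 < \<delta> \<and> \<delta> < \<delta>E \<longrightarrow> hcontent h \<delta> (closed_segment a (a + t *\<^sub>R e) \<inter> E) > 1)))"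

end

theory Submission imports Defs begin

lemma sgn_diff_bound:
  fixes u v :: "'a::real_normed_vector"
  assumes "u \<noteq> 0"
  shows "norm (sgn u - sgn v) \<le> 2 * norm (u - v) / norm u"
proof (cases "v = 0")
  case True thus ?thesis using assms by (simp add: norm_sgn)
next
  case False
  have nu: "norm u > 0" using assms by simp
  have nv: "norm v > 0" using False by simp
  have "sgn u - sgn v = (1/norm u) *\<^sub>R (u - v) + ((1/norm u) - (1/norm v)) *\<^sub>R v"
    by (simp add: sgn_div_norm algebra_simps divide_inverse)
  hence "norm (sgn u - sgn v) \<le> norm ((1/norm u) *\<^sub>R (u - v)) + norm (((1/norm u) - (1/norm v)) *\<^sub>R v)"
    by (metis norm_triangle_ineq)
  also have "norm ((1/norm u) *\<^sub>R (u - v)) = norm (u - v) / norm u" by simp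
  also have "norm (((1/norm u) - (1/norm v)) *\<^sub>R v) = \<bar>norm v - norm u\<bar> / norm u"
    using nu nv by (simp add: field_simps abs_mult)
  also have "\<bar>norm v - norm u\<bar> \<le> norm (u - v)"
    by (metis abs_minus_commute norm_triangle_ineq3)
  hence "\<bar>norm v - norm u\<bar> / norm u \<le> norm (u - v) / norm u" using nu by (simp add: divide_right_mono)
  finally show ?thesis by simp
qed

lemma gauge_h_nonneg: "0 \<le> gauge_h x"
proof -
  have "exp (-1::real) \<le> 1" by simp
  hence "x < exp (-1) \<Longrightarrow> x \<le> 1" by linarith
  thus ?thesis unfolding gauge_h_def by (auto simp: ln_div intro!: ln_ge_zero)
qed

lemma gauge_h_bound:
  assumes "0 \<le> x" "x \<le> exp (- y)" "y > 1"
  shows "gauge_h x \<le> 1 / y"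
proof (cases "x = 0")
  case True thus ?thesis using assms by (simp add: gauge_h_def)
next
  case False
  hence x0: "x > 0" using assms by simp
  have "exp (-y) < exp (-1)" using assms by simp
  hence xl: "x < exp (-1)" using assms by linarith
  have "ln x \<le> - y" using assms x0 by (metis ln_exp ln_le_cancel_iff exp_gt_zero)
  hence "ln (1/x) \<ge> y" using x0 by (simp add: ln_div)
  hence "1 / ln (1/x) \<le> 1 / y" using assms by (intro divide_left_mono) auto
  thus ?thesis using x0 xl unfolding gauge_h_def by auto
qed

lemma class_exists:
  fixes y \<mu> :: real
  assumes "y \<ge> 1" "\<mu> > 1"
  shows "\<exists>m::nat. \<mu>^m \<le> y \<and> y < \<mu>^(m+1)"
proof -
  obtain n where n: "y < \<mu>^n" using real_arch_pow assms by blast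
  define m where "m = (LEAST k. y < \<mu>^(k+1))"
  have ex: "y < \<mu>^(n+1)" using n assms
    by (smt (verit) less_imp_le_nat power_increasing le_add1)
  have m1: "y < \<mu>^(m+1)" unfolding m_def by (rule LeastI[of _ n], rule ex)
  have "\<mu>^m \<le> y"
  proof (cases m)
    case 0 thus ?thesis using assms by simp
  next
    case (Suc k)
    have "\<not> y < \<mu>^(k+1)" using not_less_Least[of k "\<lambda>k. y < \<mu>^(k+1)"] Suc m_def by simp
    thus ?thesis using Suc by simp
  qed
  thus ?thesis using m1 by blast
qed

lemma claim:
  fixes C :: "nat \<Rightarrow> (real^2) set" and F :: "(real^2) set" and \<mu> c X \<delta>' :: real
  assumes bC: "\<And>i. bounded (C i)" and cov: "F \<subseteq> (\<Union>i. C i)"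
    and dC: "\<And>i. diameter (C i) < exp (- X)"
    and mu: "\<mu> > 1" and c: "0 < c" and X: "X > 0" and cX: "c * X * (1 - 1 / sqrt \<mu>) \<ge> 1"
    and dl: "exp (- (c * X)) < \<delta>'" and bF: "bounded F"
    and big: "hcontent gauge_h \<delta>' F > 1"
  shows "\<exists>i j x y. 0 < diameter (C j) \<and> diameter (C j) \<le> diameter (C i) \<and>
     diameter (C i) powr \<mu> \<le> diameter (C j) \<and> x \<in> C i \<and> x \<in> F \<and> y \<in> C j \<and> y \<in> F \<and>
     diameter (C i) powr c \<le> dist x y"
proof (rule ccontr)
  assume nope: "\<not> ?thesis"
  define d where "d i = diameter (C i)" for i
  define cls where "cls m i \<longleftrightarrow> 0 < d i \<and> \<mu>^m * X \<le> - ln (d i) \<and> - ln (d i) < \<mu>^(m+1) * X" for m i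
  define T where "T m = (\<Union>i\<in>{i. cls m i}. C i \<inter> F)" for m
  define Z where "Z i = (if d i = 0 then C i \<inter> F else {})" for i
  define K where "K n = (if even n then T (n div 2) else Z (n div 2))" for n
  define r where "r = 1 / sqrt \<mu>"
  define B where "B = 1 / (c * X)"
  have d0: "0 \<le> d i" for i unfolding d_def by (rule diameter_ge_0[OF bC])
  have sm: "sqrt \<mu> > 1" using mu by simp
  have r01: "0 < r" "r < 1" using sm unfolding r_def by auto
  have r2: "r^2 = 1 / \<mu>" unfolding r_def using mu by (simp add: power_divide)
  have cXpos: "c * X > 0" using c X by simp
  have cXgt: "c * X > 1"
  proof -
    have h1: "1 - 1 / sqrt \<mu> < 1" using sm by simp
    have "c * X * (1 - 1 / sqrt \<mu>) < c * X * 1" by (rule mult_strict_left_mono[OF h1 cXpos])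
    thus ?thesis using cX by linarith
  qed
  have mupow: "\<mu>^m \<ge> 1" for m using mu by simp
  have Tdiam: "diameter (T m) \<le> exp (- (c * \<mu>^m * X))" for m
  proof (rule diameter_le)
    show "T m \<noteq> {} \<or> 0 \<le> exp (- (c * \<mu>^m * X))" by simp
    have key: "dist x y < exp (- (c*\<mu>^m*X))"
      if "cls m i" "cls m j" "x \<in> C i" "x\<in>F" "y\<in>C j" "y\<in>F" "d j \<le> d i" for i j x y
    proof -
      have di: "d i > 0" "d j > 0" using that unfolding cls_def by auto
      have "- ln (d j) < \<mu> * (\<mu>^m * X)" using that unfolding cls_def by simp
      also have "\<dots> \<le> \<mu> * (- ln (d i))"
      proof -
        have "\<mu>^m * X \<le> - ln (d i)" using that unfolding cls_def by simp
        thus ?thesis using mu by (intro mult_left_mono) auto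
      qed
      finally have "\<mu> * ln (d i) < ln (d j)" by simp
      hence "exp (\<mu> * ln (d i)) < exp (ln (d j))" by simp
      hence "d i powr \<mu> < d j" using di by (simp add: powr_def)
      hence le: "d i powr \<mu> \<le> d j" by simp
      show ?thesis
      proof (rule ccontr)
        assume neg: "\<not> dist x y < exp (- (c*\<mu>^m*X))"
        have "\<not> d i powr c \<le> dist x y"
          using nope le that di unfolding d_def by blast
      moreover have "d i powr c \<le> exp (- (c*\<mu>^m*X))"
      proof -
        have "ln (d i) \<le> - (\<mu>^m*X)" using that unfolding cls_def by simp
        hence "c * ln (d i) \<le> c * (- (\<mu>^m*X))" using c by (intro mult_left_mono) auto
        hence "c * ln (d i) \<le> - (c*\<mu>^m*X)" by (simp add: mult.assoc)
        thus ?thesis using di by (simp add: powr_def)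
      qed
      ultimately show False using neg by linarith
      qed
    qed
    fix x y assume "x \<in> T m" "y \<in> T m"
    then obtain i j where i: "cls m i" "x \<in> C i" "x \<in> F" and j: "cls m j" "y \<in> C j" "y \<in> F"
      unfolding T_def by auto
    show "norm (x - y) \<le> exp (- (c * \<mu>^m * X))"
    proof (cases "d j \<le> d i")
      case True thus ?thesis using key[OF i(1) j(1) i(2,3) j(2,3)] by (simp add: dist_norm)
    next
      case False thus ?thesis using key[OF j(1) i(1) j(2,3) i(2,3)] by (simp add: dist_norm norm_minus_commute)
    qed
  qed
  have Tb: "bounded (T m)" for m using bF unfolding T_def by (rule bounded_subset) auto
  have Zb: "bounded (Z i)" for i using bF unfolding Z_def by (auto intro: bounded_subset)
  have Zd: "diameter (Z i) = 0" for i
  proof (cases "d i = 0")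
    case True
    have "diameter (C i \<inter> F) \<le> d i" unfolding d_def by (rule diameter_subset) (auto simp: bC)
    moreover have "0 \<le> diameter (C i \<inter> F)" by (rule diameter_ge_0) (auto intro: bounded_subset bF)
    ultimately show ?thesis using True unfolding Z_def by simp
  qed (simp add: Z_def)
  have Kb: "bounded (K n)" for n using Tb Zb unfolding K_def by simp
  have dlpos: "\<delta>' > 0" using dl by (meson exp_gt_zero less_trans)
  have Kd: "diameter (K n) < \<delta>'" for n
  proof (cases "even n")
    case True
    have A: "c * X \<le> c * \<mu>^(n div 2) * X"
      using mupow[of "n div 2"] cXpos c X by (simp add: mult_le_cancel_right1 mult.assoc)
    have "exp (- (c * \<mu>^(n div 2) * X)) \<le> exp (- (c * X))" using A by simp
    hence "diameter (T (n div 2)) < \<delta>'" using Tdiam[of "n div 2"] dl by linarith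
    thus ?thesis using True unfolding K_def by simp
  next
    case False thus ?thesis using Zd dlpos unfolding K_def by simp
  qed
  have Kh: "gauge_h (diameter (K n)) \<le> B * r^n" for n
  proof (cases "even n")
    case True
    then obtain m where n: "n = 2 * m" by blast
    have dT: "0 \<le> diameter (T m)" using Tb diameter_ge_0 by blast
    have gt: "c * \<mu>^m * X > 1"
    proof -
      have "c * X \<le> c * \<mu>^m * X" using mupow[of m] cXpos c X
        by (simp add: mult_le_cancel_right1 mult.assoc)
      thus ?thesis using cXgt by linarith
    qed
    have "gauge_h (diameter (T m)) \<le> 1 / (c * \<mu>^m * X)"
      by (rule gauge_h_bound[OF dT Tdiam gt])
    also have "\<dots> = B * (r^2)^m" unfolding B_def r2 using mu by (simp add: power_one_over field_simps)
    also have "\<dots> = B * r^n" by (simp add: n power_mult)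
    finally show ?thesis using n unfolding K_def by simp
  next
    case False
    thus ?thesis using Zd r01 cXpos unfolding K_def B_def by (simp add: gauge_h_def)
  qed
  have Kcov: "F \<subseteq> (\<Union>n. K n)"
  proof
    fix x assume xF: "x \<in> F"
    then obtain i where xi: "x \<in> C i" using cov by auto
    show "x \<in> (\<Union>n. K n)"
    proof (cases "d i = 0")
      case True
      hence "x \<in> K (2*i+1)" using xi xF unfolding K_def Z_def by simp
      thus ?thesis by blast
    next
      case False
      hence dp: "d i > 0" using d0 by (simp add: order_less_le)
      have "ln (d i) < ln (exp (- X))" using dC[of i] dp unfolding d_def
        by (subst ln_less_cancel_iff) auto
      hence "ln (d i) < - X" by simp
      hence y1: "- ln (d i) / X \<ge> 1" using X by (simp add: field_simps)
      obtain m where m: "\<mu>^m \<le> - ln (d i) / X" "- ln (d i) / X < \<mu>^(m+1)"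
        using class_exists[OF y1 mu] by blast
      have "cls m i" unfolding cls_def using dp m X by (simp add: field_simps)
      hence "x \<in> K (2*m)" using xi xF unfolding K_def T_def by auto
      thus ?thesis by blast
    qed
  qed
  have "hcontent gauge_h \<delta>' F \<le> (\<Sum>n. ennreal (gauge_h (diameter (K n))))"
    unfolding hcontent_def using Kcov Kb Kd by (intro INF_lower) auto
  also have "\<dots> \<le> (\<Sum>n. ennreal (B * r^n))"
    by (intro suminf_le summableI ennreal_leI Kh)
  also have "\<dots> = ennreal (\<Sum>n. B * r^n)"
    using r01 cXpos by (intro suminf_ennreal2) (auto simp: B_def intro!: summable_mult summable_geometric)
  also have "(\<Sum>n. B * r^n) = B / (1 - r)"
    using r01 by (simp add: suminf_mult suminf_geometric summable_geometric)
  also have "ennreal (B / (1 - r)) \<le> 1"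
  proof -
    have "c * X * (1 - r) \<ge> 1" using cX unfolding r_def .
    hence "B / (1 - r) \<le> 1" using r01 cXpos unfolding B_def by (simp add: field_simps)
    thus ?thesis by (simp add: ennreal_le_1)
  qed
  finally have "hcontent gauge_h \<delta>' F \<le> 1" .
  thus False using big by simp
qed

lemma dir_diam:
  fixes P Q :: "(real^2) set" and \<sigma> \<rho> D :: real
  assumes bP: "bounded P" and bQ: "bounded Q" and rho: "\<rho> > 0" and D0: "0 \<le> D"
    and dP: "diameter P \<le> D" and dQ: "diameter Q \<le> D" and sig: "\<bar>\<sigma>\<bar> = 1"
  shows "diameter {\<sigma> *\<^sub>R sgn (y - x) | x y. x \<in> P \<and> y \<in> Q \<and> \<rho> \<le> dist x y} \<le> 4 * D / \<rho>"
proof (rule diameter_le)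
  show "{\<sigma> *\<^sub>R sgn (y - x) | x y. x \<in> P \<and> y \<in> Q \<and> \<rho> \<le> dist x y} \<noteq> {} \<or> 0 \<le> 4 * D / \<rho>"
    using D0 rho by simp
  fix z1 z2 assume "z1 \<in> {\<sigma> *\<^sub>R sgn (y - x) | x y. x \<in> P \<and> y \<in> Q \<and> \<rho> \<le> dist x y}"
    "z2 \<in> {\<sigma> *\<^sub>R sgn (y - x) | x y. x \<in> P \<and> y \<in> Q \<and> \<rho> \<le> dist x y}"
  then obtain x y x' y' where z1: "z1 = \<sigma> *\<^sub>R sgn (y - x)" "x \<in> P" "y \<in> Q" "\<rho> \<le> dist x y"
    and z2: "z2 = \<sigma> *\<^sub>R sgn (y' - x')" "x' \<in> P" "y' \<in> Q" "\<rho> \<le> dist x' y'" by blast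
  have nu: "norm (y - x) \<ge> \<rho>" using z1 by (simp add: dist_norm norm_minus_commute)
  hence u0: "y - x \<noteq> 0" using rho by auto
  have "z1 - z2 = \<sigma> *\<^sub>R (sgn (y - x) - sgn (y' - x'))"
    unfolding z1(1) z2(1) by (rule scaleR_diff_right[symmetric])
  hence "norm (z1 - z2) = norm (sgn (y - x) - sgn (y' - x'))"
    using sig by simp
  also have "\<dots> \<le> 2 * norm ((y - x) - (y' - x')) / norm (y - x)" by (rule sgn_diff_bound[OF u0])
  also have "norm ((y - x) - (y' - x')) \<le> 2 * D"
  proof -
    have "(y - x) - (y' - x') = (y - y') - (x - x')" by (simp add: algebra_simps)
    hence "norm ((y - x) - (y' - x')) \<le> norm (y - y') + norm (x - x')"
      by (metis norm_triangle_ineq4)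
    also have "norm (y - y') \<le> D" using diameter_bounded_bound[OF bQ z1(3) z2(3)] dQ by (simp add: dist_norm)
    also have "norm (x - x') \<le> D" using diameter_bounded_bound[OF bP z1(2) z2(2)] dP by (simp add: dist_norm)
    finally show ?thesis by simp
  qed
  hence "2 * norm ((y - x) - (y' - x')) / norm (y - x) \<le> 2 * (2 * D) / \<rho>"
    using nu rho D0 by (intro frac_le) auto
  finally show "norm (z1 - z2) \<le> 4 * D / \<rho>" by simp
qed

lemma choose_X:
  fixes c \<kappa> a b :: real
  assumes "0 < c" "c < 1" "0 < \<kappa>" "0 < a" "0 < b"
  shows "\<exists>X>0. c * X * \<kappa> \<ge> 1 \<and> exp (- (c * X)) < a \<and> 4 * exp (- ((1 - c) * X)) < b"
proof -
  define X where "X = 1 + 1/(c*\<kappa>) + \<bar>ln a\<bar>/c + \<bar>ln (4/b)\<bar>/(1-c)"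
  have p1: "0 \<le> 1/(c*\<kappa>)" "0 \<le> \<bar>ln a\<bar>/c" "0 \<le> \<bar>ln (4/b)\<bar>/(1-c)" using assms by auto
  have X0: "X > 0" unfolding X_def using p1 by linarith
  have "1/(c*\<kappa>) \<le> X" unfolding X_def using p1 by linarith
  hence "c*\<kappa> * (1/(c*\<kappa>)) \<le> c*\<kappa> * X" using assms by (intro mult_left_mono) auto
  hence A: "c * X * \<kappa> \<ge> 1" using assms by (simp add: field_simps)
  have "\<bar>ln a\<bar>/c < X" unfolding X_def using p1 by linarith
  hence "c * (\<bar>ln a\<bar>/c) < c * X" using assms by (intro mult_strict_left_mono) auto
  hence "- ln a < c * X" using assms by simp
  hence "exp (- (c * X)) < exp (ln a)" by simp
  hence B: "exp (- (c * X)) < a" using assms by simp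
  have "\<bar>ln (4/b)\<bar>/(1-c) < X" unfolding X_def using p1 by linarith
  hence "(1-c) * (\<bar>ln (4/b)\<bar>/(1-c)) < (1-c) * X" using assms by (intro mult_strict_left_mono) auto
  hence "ln (4/b) < (1-c) * X" using assms by simp
  hence "exp (- ((1 - c) * X)) < exp (- ln (4/b))" by simp
  also have "exp (- ln (4/b)) = b/4"
  proof -
    have "exp (ln (4/b)) = 4/b" using assms by simp
    thus ?thesis by (simp add: exp_minus)
  qed
  finally have C: "4 * exp (- ((1 - c) * X)) < b" by simp
  show ?thesis using X0 A B C by blast
qed

lemma zeroL:
  fixes \<beta> s \<delta>E :: real and E L :: "(real^2) set"
  assumes b: "0 < \<beta>" "\<beta> \<le> 1" and s: "0 \<le> s" "s < \<beta>/2"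
    and Lsph: "L \<subseteq> sphere 0 1" and dE: "\<delta>E > 0"
    and Lseg: "\<forall>e\<in>L. \<exists>a t. t > 0 \<and> (\<forall>\<delta>. 0 < \<delta> \<and> \<delta> < \<delta>E \<longrightarrow>
                 hcontent gauge_h \<delta> (closed_segment a (a + t *\<^sub>R e) \<inter> E) > 1)"
    and E0: "hmeasure (\<lambda>x. x powr s) E = 0"
  shows "hmeasure (gauge_g \<beta>) L = 0"
proof -
  define tau where "tau = (\<beta> - 2 * s) / (2*(s+\<beta>))"
  define \<mu> where "\<mu> = 1 + tau"
  define c where "c = tau"
  have sb: "s + \<beta> > 0" using b s by simp
  have tau0: "0 < tau" unfolding tau_def using b s by (intro divide_pos_pos) auto
  have taueq: "tau * s + tau * \<beta> = (\<beta> - 2 * s) / 2"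
  proof -
    have "tau * (s + \<beta>) = (\<beta> - 2 * s) / 2" unfolding tau_def using sb by (simp add: field_simps)
    thus ?thesis by (simp add: distrib_left)
  qed
  have tau1: "tau < 1" unfolding tau_def using sb s b by (subst divide_less_eq_1_pos) auto
  have mu: "\<mu> > 1" unfolding \<mu>_def using tau0 by simp
  have c: "0 < c" "c < 1" unfolding c_def using tau0 tau1 by auto
  have expo: "s * (1 + \<mu>) \<le> (1 - c) * \<beta>"
  proof -
    have "s * (1 + \<mu>) = 2 * s + tau * s" unfolding \<mu>_def by (simp add: algebra_simps)
    moreover have "(1 - c) * \<beta> = \<beta> - tau * \<beta>" unfolding c_def by (simp add: algebra_simps)
    moreover have "2 * s + tau * s \<le> \<beta> - tau * \<beta>"
    proof -
      have gen: "\<And>p q. p + q = (\<beta> - 2 * s) / 2 \<Longrightarrow> 2 * s + p \<le> \<beta> - q" using s by simp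
      show ?thesis by (rule gen[OF taueq])
    qed
    ultimately show ?thesis by simp
  qed
  have sm: "sqrt \<mu> > 1" using mu by simp
  have kappa: "0 < 1 - 1 / sqrt \<mu>" using sm by simp
  show ?thesis unfolding hmeasure_def
  proof (rule antisym)
    show "(SUP \<delta>\<in>{0<..}. hcontent (gauge_g \<beta>) \<delta> L) \<le> 0"
    proof (rule SUP_least)
      fix \<delta>'' :: real assume "\<delta>'' \<in> {0<..}" hence d2: "\<delta>'' > 0" by simp
      show "hcontent (gauge_g \<beta>) \<delta>'' L \<le> 0"
      proof (rule ennreal_le_epsilon)
        fix \<eta> :: real assume eta: "0 < \<eta>"
        define Kc where "Kc = 2 * 4 powr \<beta>"
        define \<epsilon> where "\<epsilon> = min 1 (\<eta> / Kc)"
        have Kc0: "Kc > 0" unfolding Kc_def by simp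
        have eps: "0 < \<epsilon>" "\<epsilon> \<le> 1" "Kc * \<epsilon> \<le> \<eta>"
          unfolding \<epsilon>_def using Kc0 eta by (auto simp: field_simps min_def)
        have dE2: "0 < \<delta>E / 2" using dE by simp
        obtain X where X: "X > 0" "c * X * (1 - 1 / sqrt \<mu>) \<ge> 1" "exp (- (c * X)) < \<delta>E / 2"
            "4 * exp (- ((1 - c) * X)) < \<delta>''"
          using choose_X[OF c kappa dE2 d2] by blast
        have "hcontent (\<lambda>x. x powr s) (exp (- X)) E \<le> (SUP \<delta>\<in>{0<..}. hcontent (\<lambda>x. x powr s) \<delta> E)"
          by (rule SUP_upper) simp
        hence "hcontent (\<lambda>x. x powr s) (exp (- X)) E = 0" using E0 unfolding hmeasure_def by simp
        hence "hcontent (\<lambda>x. x powr s) (exp (- X)) E < ennreal \<epsilon>" using eps by simp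
        then obtain C where C: "E \<subseteq> (\<Union>i. C i)" "\<And>i. bounded (C i)" "\<And>i. diameter (C i) < exp (- X)"
          and Csum: "(\<Sum>i. ennreal (diameter (C i) powr s)) < ennreal \<epsilon>"
          unfolding hcontent_def INF_less_iff by blast
        define d where "d i = diameter (C i)" for i
        define a where "a i = d i powr s" for i
        have d0: "0 \<le> d i" for i unfolding d_def by (rule diameter_ge_0[OF C(2)])
        have dlt: "d i < exp (- X)" for i unfolding d_def by (rule C(3))
        have ex1: "exp (- X) < 1" using X by simp
        have d1: "d i \<le> 1" for i using dlt[of i] ex1 by linarith
        have a0: "0 \<le> a i" for i unfolding a_def by simp
        have asum: "summable a"
          using Csum by (intro summable_suminf_not_top a0) (auto simp: a_def d_def)
        have Sless: "(\<Sum>i. a i) < \<epsilon>"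
          using Csum suminf_ennreal2[OF a0 asum] suminf_nonneg[OF asum a0]
          by (auto simp: a_def d_def ennreal_less_iff)
        define S where "S = (\<Sum>i. a i)"
        have S0: "0 \<le> S" unfolding S_def by (rule suminf_nonneg[OF asum a0])
        define Dir where "Dir i j \<sigma> = (if 0 < d j \<and> d j \<le> d i \<and> d i powr \<mu> \<le> d j then
            {\<sigma> *\<^sub>R sgn (y - x) | x y. x \<in> C i \<and> y \<in> C j \<and> d i powr c \<le> dist x y} else {})"
          for i j and \<sigma> :: real
        define D where "D n = (case prod_decode n of (i, q) \<Rightarrow> (case prod_decode q of (j, k) \<Rightarrow>
            if k = 0 then Dir i j 1 else if k = 1 then Dir i j (-1) else {}))" for n
        define w where "w n = (case prod_decode n of (i, q) \<Rightarrow> (case prod_decode q of (j, k) \<Rightarrow>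
            if k \<le> 1 then 4 powr \<beta> * a i * a j else 0))" for n
        have w0: "0 \<le> w n" for n unfolding w_def using a0 by (auto split: prod.splits)
        have g0: "gauge_g \<beta> 0 = 0" unfolding gauge_g_def by simp
        have Dirprop: "bounded (Dir i j \<sigma>) \<and> diameter (Dir i j \<sigma>) < \<delta>'' \<and>
            gauge_g \<beta> (diameter (Dir i j \<sigma>)) \<le> 4 powr \<beta> * a i * a j" if sig: "\<bar>\<sigma>\<bar> = 1" for i j \<sigma>
        proof (cases "0 < d j \<and> d j \<le> d i \<and> d i powr \<mu> \<le> d j")
          case False
          hence "Dir i j \<sigma> = {}" unfolding Dir_def by (rule if_not_P)
          moreover have "0 \<le> 4 powr \<beta> * a i * a j" using a0 by simp
          ultimately show ?thesis using d2 g0 by simp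
        next
          case True
          have dip: "d i > 0" using True by linarith
          have rho: "d i powr c > 0" using dip by simp
          have bnd: "bounded (Dir i j \<sigma>)"
          proof (rule bounded_subset[OF bounded_cball[of 0 1]])
            show "Dir i j \<sigma> \<subseteq> cball 0 1"
              using True sig unfolding Dir_def by (auto simp: norm_sgn)
          qed
          have dd: "diameter (Dir i j \<sigma>) \<le> 4 * d i / d i powr c"
          proof -
            have dP: "diameter (C i) \<le> d i" unfolding d_def by simp
            have dQ: "diameter (C j) \<le> d i" using True unfolding d_def by simp
            have "Dir i j \<sigma> = {\<sigma> *\<^sub>R sgn (y - x) | x y. x \<in> C i \<and> y \<in> C j \<and> d i powr c \<le> dist x y}"
              unfolding Dir_def using True by (rule if_P)
            thus ?thesis using dir_diam[OF C(2)[of i] C(2)[of j] rho d0[of i] dP dQ sig] by simp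
          qed
          have eqp: "4 * d i / d i powr c = 4 * d i powr (1 - c)"
            using dip by (simp add: powr_diff)
          have "d i powr (1 - c) < exp (- X) powr (1 - c)"
            using c d0 dlt by (intro powr_less_mono2) auto
          also have "exp (- X) powr (1 - c) = exp (- ((1 - c) * X))" by (simp add: powr_def)
          finally have "4 * d i powr (1 - c) < \<delta>''" using X(4) by linarith
          hence diam_lt: "diameter (Dir i j \<sigma>) < \<delta>''" using dd eqp by linarith
          have diam0: "0 \<le> diameter (Dir i j \<sigma>)" by (rule diameter_ge_0[OF bnd])
          have "gauge_g \<beta> (diameter (Dir i j \<sigma>)) \<le> (4 * d i powr (1 - c)) powr \<beta>"
            unfolding gauge_g_def using dd eqp diam0 b by (intro powr_mono2) auto
          also have "\<dots> = 4 powr \<beta> * d i powr ((1 - c) * \<beta>)"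
            using d0 by (simp add: powr_mult powr_powr)
          also have "d i powr ((1 - c) * \<beta>) \<le> d i powr (s * (1 + \<mu>))"
            using expo d0 d1 by (intro powr_mono') auto
          also have "d i powr (s * (1 + \<mu>)) = a i * (d i powr \<mu>) powr s"
            unfolding a_def by (simp add: powr_powr powr_add[symmetric] algebra_simps)
          also have "(d i powr \<mu>) powr s \<le> a j"
            unfolding a_def using True s by (intro powr_mono2) auto
          finally have gb: "gauge_g \<beta> (diameter (Dir i j \<sigma>)) \<le> 4 powr \<beta> * a i * a j"
            using a0 by (simp add: mult_left_mono mult.assoc)
          show ?thesis using bnd diam_lt gb by blast
        qed
        have Dprop: "bounded (D n) \<and> diameter (D n) < \<delta>'' \<and> gauge_g \<beta> (diameter (D n)) \<le> w n" for n
        proof -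
          obtain i q where iq: "prod_decode n = (i, q)" by (cases "prod_decode n") auto
          obtain j k where jk: "prod_decode q = (j, k)" by (cases "prod_decode q") auto
          have Deq: "D n = (if k = 0 then Dir i j 1 else if k = 1 then Dir i j (-1) else {})"
            by (simp add: D_def iq jk)
          have weq: "w n = (if k \<le> 1 then 4 powr \<beta> * a i * a j else 0)"
            by (simp add: w_def iq jk)
          show ?thesis
          proof (cases "k \<le> 1")
            case True
            hence "k = 0 \<or> k = 1" by auto
            thus ?thesis using Dirprop[of 1 i j] Dirprop[of "-1" i j] Deq weq by auto
          next
            case False
            thus ?thesis using d2 g0 Deq weq by auto
          qed
        qed
        have Lcov: "L \<subseteq> (\<Union>n. D n)"
        proof
          fix e assume eL: "e \<in> L"
          obtain a0 t where t: "t > 0" and hc: "\<forall>\<delta>. 0 < \<delta> \<and> \<delta> < \<delta>E \<longrightarrow>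
              hcontent gauge_h \<delta> (closed_segment a0 (a0 + t *\<^sub>R e) \<inter> E) > 1"
            using Lseg eL by blast
          define F where "F = closed_segment a0 (a0 + t *\<^sub>R e) \<inter> E"
          have bF: "bounded F" unfolding F_def by (simp add: bounded_Int bounded_closed_segment)
          have covF: "F \<subseteq> (\<Union>i. C i)" using C(1) unfolding F_def by auto
          have big: "hcontent gauge_h (\<delta>E/2) F > 1" using hc dE unfolding F_def by auto
          obtain i j x y where ij: "0 < d j" "d j \<le> d i" "d i powr \<mu> \<le> d j" "x \<in> C i" "x \<in> F"
              "y \<in> C j" "y \<in> F" "d i powr c \<le> dist x y"
            using claim[OF C(2) covF C(3) mu c(1) X(1) X(2) X(3) bF big] unfolding d_def by blast
          have ne: "norm e = 1" using Lsph eL by auto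
          obtain u where u: "x = (1 - u) *\<^sub>R a0 + u *\<^sub>R (a0 + t *\<^sub>R e)"
            using ij(5) unfolding F_def by (auto simp: in_segment)
          obtain v where v: "y = (1 - v) *\<^sub>R a0 + v *\<^sub>R (a0 + t *\<^sub>R e)"
            using ij(7) unfolding F_def by (auto simp: in_segment)
          define l where "l = (v - u) * t"
          have yx: "y - x = l *\<^sub>R e" unfolding u v l_def by (simp add: algebra_simps)
          have dip: "d i > 0" using ij by linarith
          have "dist x y > 0" using ij(8) dip by (smt (verit) powr_gt_zero)
          hence "y \<noteq> x" by auto
          hence l0: "l \<noteq> 0" using yx by auto
          have sg: "sgn (y - x) = sgn l *\<^sub>R e" using yx ne by (simp add: sgn_scaleR sgn_div_norm)
          define \<sigma> where "\<sigma> = sgn l"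
          have sig: "\<sigma> = 1 \<or> \<sigma> = -1" unfolding \<sigma>_def using l0 by (simp add: sgn_real_def)
          have "e = \<sigma> *\<^sub>R sgn (y - x)" using sg sig unfolding \<sigma>_def by auto
          hence eDir: "e \<in> Dir i j \<sigma>" unfolding Dir_def using ij by auto
          show "e \<in> (\<Union>n. D n)"
          proof (cases "\<sigma> = 1")
            case True
            hence "e \<in> D (prod_encode (i, prod_encode (j, 0)))" using eDir unfolding D_def by simp
            thus ?thesis by blast
          next
            case False
            hence "\<sigma> = -1" using sig by simp
            hence "e \<in> D (prod_encode (i, prod_encode (j, 1)))" using eDir unfolding D_def by simp
            thus ?thesis by blast
          qed
        qed
        have wpart: "(\<Sum>n<N. w n) \<le> Kc * \<epsilon>" for N
        proof -
          define \<phi> where "\<phi> n = (fst (prod_decode n), prod_decode (snd (prod_decode n)))" for n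
          define W where "W p = (case p of (i, j, k) \<Rightarrow> if k \<le> 1 then 4 powr \<beta> * a i * a j else (0::real))"
            for p :: "nat \<times> nat \<times> nat"
          have wW: "w n = W (\<phi> n)" for n
            unfolding w_def W_def \<phi>_def by (simp split: prod.splits)
          have injphi: "inj \<phi>"
          proof (rule injI)
            fix n m assume pe: "\<phi> n = \<phi> m"
            have f1: "fst (prod_decode n) = fst (prod_decode m)" using pe unfolding \<phi>_def by simp
            have "prod_decode (snd (prod_decode n)) = prod_decode (snd (prod_decode m))"
              using pe unfolding \<phi>_def by simp
            hence "snd (prod_decode n) = snd (prod_decode m)" by simp
            hence "prod_decode n = prod_decode m" using f1 by (simp add: prod_eq_iff)
            thus "n = m" by simp
          qed
          have W0: "0 \<le> W p" for p unfolding W_def using a0 by (auto split: prod.splits)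
          have sub: "\<phi> ` {..<N} \<subseteq> {..<N} \<times> ({..<N} \<times> {..<N})"
          proof
            fix p assume "p \<in> \<phi> ` {..<N}"
            then obtain n where n: "n < N" "p = \<phi> n" by auto
            obtain i q where iq: "prod_decode n = (i, q)" by (cases "prod_decode n") auto
            obtain j k where jk: "prod_decode q = (j, k)" by (cases "prod_decode q") auto
            have "n = prod_encode (i, q)" using iq by (metis prod_decode_inverse)
            hence "i \<le> n" "q \<le> n" using le_prod_encode_1 le_prod_encode_2 by auto
            moreover have "q = prod_encode (j, k)" using jk by (metis prod_decode_inverse)
            hence "j \<le> q" "k \<le> q" using le_prod_encode_1 le_prod_encode_2 by auto
            ultimately show "p \<in> {..<N} \<times> ({..<N} \<times> {..<N})" using n iq jk unfolding \<phi>_def by auto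
          qed
          have inner: "(\<Sum>k<N. W (i, j, k)) \<le> 2 * (4 powr \<beta> * a i * a j)" for i j
          proof -
            have v0: "0 \<le> 4 powr \<beta> * a i * a j" using a0 by simp
            have "(\<Sum>k<N. W (i, j, k)) = (\<Sum>k\<in>{..<N} \<inter> {..1}. 4 powr \<beta> * a i * a j)"
              unfolding W_def by (simp add: sum.If_cases Int_def)
            also have "\<dots> = real (card ({..<N} \<inter> {..1::nat})) * (4 powr \<beta> * a i * a j)" by simp
            also have "\<dots> \<le> 2 * (4 powr \<beta> * a i * a j)"
            proof -
              have "card ({..<N} \<inter> {..1::nat}) \<le> card {..1::nat}" by (rule card_mono) auto
              hence "real (card ({..<N} \<inter> {..1::nat})) \<le> 2" by simp
              thus ?thesis using v0 by (intro mult_right_mono) auto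
            qed
            finally show ?thesis .
          qed
          have PS: "(\<Sum>i<N. a i) \<le> S" unfolding S_def using asum a0 by (intro sum_le_suminf) auto
          have PS0: "0 \<le> (\<Sum>i<N. a i)" using a0 by (simp add: sum_nonneg)
          have "(\<Sum>n<N. w n) = (\<Sum>n<N. W (\<phi> n))" by (simp add: wW)
          also have "\<dots> = (\<Sum>p\<in>\<phi> ` {..<N}. W p)"
            by (rule sum.reindex[symmetric, unfolded comp_def]) (rule inj_on_subset[OF injphi], simp)
          also have "\<dots> \<le> (\<Sum>p \<in> {..<N} \<times> ({..<N} \<times> {..<N}). W p)"
            by (rule sum_mono2) (use sub W0 in auto)
          also have "\<dots> = (\<Sum>i<N. \<Sum>j<N. \<Sum>k<N. W (i, j, k))"
            by (simp add: sum.cartesian_product)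
          also have "\<dots> \<le> (\<Sum>i<N. \<Sum>j<N. 2 * (4 powr \<beta> * a i * a j))"
            by (intro sum_mono inner)
          also have "\<dots> = Kc * ((\<Sum>i<N. a i) * (\<Sum>j<N. a j))"
            unfolding Kc_def by (simp add: sum_distrib_left sum_product algebra_simps)
          also have "\<dots> \<le> Kc * (S * S)"
            using PS PS0 Kc0 by (intro mult_left_mono mult_mono) auto
          also have "\<dots> \<le> Kc * \<epsilon>"
          proof -
            have "S * S \<le> S * 1" using S0 Sless eps unfolding S_def by (intro mult_left_mono) auto
            hence "S * S \<le> \<epsilon>" using Sless unfolding S_def by linarith
            thus ?thesis using Kc0 by simp
          qed
          finally show ?thesis .
        qed
        have wsum: "summable w" by (rule summableI_nonneg_bounded[OF w0 wpart])
        have "hcontent (gauge_g \<beta>) \<delta>'' L \<le> (\<Sum>n. ennreal (gauge_g \<beta> (diameter (D n))))"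
          unfolding hcontent_def using Lcov Dprop by (intro INF_lower) auto
        also have "\<dots> \<le> (\<Sum>n. ennreal (w n))"
          using Dprop by (intro suminf_le summableI ennreal_leI) auto
        also have "\<dots> = ennreal (\<Sum>n. w n)" by (rule suminf_ennreal2[OF w0 wsum])
        also have "\<dots> \<le> ennreal \<eta>"
        proof (rule ennreal_leI)
          have "(\<Sum>n. w n) \<le> Kc * \<epsilon>" by (rule suminf_le_const[OF wsum wpart])
          thus "(\<Sum>n. w n) \<le> \<eta>" using eps by linarith
        qed
        finally show "hcontent (gauge_g \<beta>) \<delta>'' L \<le> 0 + ennreal \<eta>" by simp
      qed
    qed
  qed simp
qed

theorem theorem4p6:
  fixes \<beta> :: real and E :: "(real^2) set"
  assumes "0 < \<beta>" and "\<beta> \<le> 1"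
    and "F_set gauge_h (gauge_g \<beta>) E"
  shows "hdim E \<ge> ereal (\<beta> / 2)"
proof -
  from assms(3) obtain L \<delta>E where L: "L \<subseteq> sphere 0 1" "hmeasure (gauge_g \<beta>) L > 0" "\<delta>E > 0"
    and Lseg: "\<forall>e\<in>L. \<exists>a t. t > 0 \<and> (\<forall>\<delta>. 0 < \<delta> \<and> \<delta> < \<delta>E \<longrightarrow>
                 hcontent gauge_h \<delta> (closed_segment a (a + t *\<^sub>R e) \<inter> E) > 1)"
    unfolding F_set_def by blast
  show ?thesis unfolding hdim_def
  proof (rule Inf_greatest)
    fix z assume "z \<in> {ereal s |s. 0 \<le> s \<and> hmeasure (\<lambda>x. x powr s) E = 0}"
    then obtain s where z: "z = ereal s" "0 \<le> s" "hmeasure (\<lambda>x. x powr s) E = 0" by blast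
    show "ereal (\<beta> / 2) \<le> z"
    proof (rule ccontr)
      assume "\<not> ereal (\<beta> / 2) \<le> z"
      hence s: "s < \<beta> / 2" using z by simp
      have "hmeasure (gauge_g \<beta>) L = 0"
        by (rule zeroL[OF assms(1,2) z(2) s L(1) L(3) Lseg z(3)])
      thus False using L(2) by simp
    qed
  qed
qed

end
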